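(* Let $p$ be a prime and $1\le k\le\nu$ integers, and assume that $p$ is odd, or that $p=2$ and $k\ge 2$. Let $\Omega_p^{k,\nu}:=\ker\big((\mathbb{Z}/p^\nu\mathbb{Z})^\times\to(\mathbb{Z}/p^k\mathbb{Z})^\times\big)=\{1+\beta p^k:\beta\in\mathbb{Z}/p^\nu\mathbb{Z}\}$, acting on $\mathbb{Z}/p^\nu\mathbb{Z}$ by multiplication. Then $$H^1(\Omega_p^{k,\nu},\mathbb{Z}/p^\nu\mathbb{Z})=0=H^2(\Omega_p^{k,\nu},\mathbb{Z}/p^\nu\mathbb{Z}).$$
   Context: Group cohomology of the finite group $\Omega_p^{k,\nu}$. *)

theory Defs
  imports "HOL-Number_Theory.Number_Theory"
begin

text \<open>Group cohomology in degrees 1 and 2 via inhomogeneous cochains, for a finite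
group G (carrier set with multiplication mul) acting on the module Z/NZ, represented
by the integers 0..N-1 with addition mod N; act g m is the action.\<close>

definition ZN :: "int \<Rightarrow> int set" where
  "ZN N = {0..<N}"

definition cochains1 :: "'g set \<Rightarrow> int \<Rightarrow> ('g \<Rightarrow> int) set" where
  "cochains1 G N = {f. (\<forall>g. g \<notin> G \<longrightarrow> f g = 0) \<and> (\<forall>g\<in>G. f g \<in> ZN N)}"

definition cochains2 :: "'g set \<Rightarrow> int \<Rightarrow> ('g \<Rightarrow> 'g \<Rightarrow> int) set" where
  "cochains2 G N = {c. (\<forall>g h. \<not> (g \<in> G \<and> h \<in> G) \<longrightarrow> c g h = 0)
                       \<and> (\<forall>g\<in>G. \<forall>h\<in>G. c g h \<in> ZN N)}"

definition cocycles1 :: "'g set \<Rightarrow> ('g \<Rightarrow> 'g \<Rightarrow> 'g) \<Rightarrow> ('g \<Rightarrow> int \<Rightarrow> int) \<Rightarrow> int \<Rightarrow> ('g \<Rightarrow> int) set" where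
  "cocycles1 G mul act N = {f \<in> cochains1 G N.
      \<forall>g\<in>G. \<forall>h\<in>G. (act g (f h) - f (mul g h) + f g) mod N = 0}"

definition coboundaries1 :: "'g set \<Rightarrow> ('g \<Rightarrow> 'g \<Rightarrow> 'g) \<Rightarrow> ('g \<Rightarrow> int \<Rightarrow> int) \<Rightarrow> int \<Rightarrow> ('g \<Rightarrow> int) set" where
  "coboundaries1 G mul act N = {f \<in> cochains1 G N.
      \<exists>m\<in>ZN N. \<forall>g\<in>G. f g = (act g m - m) mod N}"

definition cocycles2 :: "'g set \<Rightarrow> ('g \<Rightarrow> 'g \<Rightarrow> 'g) \<Rightarrow> ('g \<Rightarrow> int \<Rightarrow> int) \<Rightarrow> int \<Rightarrow> ('g \<Rightarrow> 'g \<Rightarrow> int) set" where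
  "cocycles2 G mul act N = {c \<in> cochains2 G N.
      \<forall>g\<in>G. \<forall>h\<in>G. \<forall>l\<in>G.
        (act g (c h l) - c (mul g h) l + c g (mul h l) - c g h) mod N = 0}"

definition coboundaries2 :: "'g set \<Rightarrow> ('g \<Rightarrow> 'g \<Rightarrow> 'g) \<Rightarrow> ('g \<Rightarrow> int \<Rightarrow> int) \<Rightarrow> int \<Rightarrow> ('g \<Rightarrow> 'g \<Rightarrow> int) set" where
  "coboundaries2 G mul act N = {c \<in> cochains2 G N.
      \<exists>b\<in>cochains1 G N. \<forall>g\<in>G. \<forall>h\<in>G. c g h = (act g (b h) - b (mul g h) + b g) mod N}"

definition H1_vanishes :: "'g set \<Rightarrow> ('g \<Rightarrow> 'g \<Rightarrow> 'g) \<Rightarrow> ('g \<Rightarrow> int \<Rightarrow> int) \<Rightarrow> int \<Rightarrow> bool" where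
  "H1_vanishes G mul act N \<longleftrightarrow> cocycles1 G mul act N \<subseteq> coboundaries1 G mul act N"

definition H2_vanishes :: "'g set \<Rightarrow> ('g \<Rightarrow> 'g \<Rightarrow> 'g) \<Rightarrow> ('g \<Rightarrow> int \<Rightarrow> int) \<Rightarrow> int \<Rightarrow> bool" where
  "H2_vanishes G mul act N \<longleftrightarrow> cocycles2 G mul act N \<subseteq> coboundaries2 G mul act N"

definition Omega :: "nat \<Rightarrow> nat \<Rightarrow> nat \<Rightarrow> int set" where
  "Omega p k \<nu> = {x \<in> {0..<int p ^ \<nu>}. [x = 1] (mod int p ^ k)}"

definition Omega_mul :: "nat \<Rightarrow> nat \<Rightarrow> int \<Rightarrow> int \<Rightarrow> int" where
  "Omega_mul p \<nu> x y = (x * y) mod (int p ^ \<nu>)"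

definition Omega_act :: "nat \<Rightarrow> nat \<Rightarrow> int \<Rightarrow> int \<Rightarrow> int" where
  "Omega_act p \<nu> g m = (g * m) mod (int p ^ \<nu>)"

end

theory Submission
  imports Defs
begin


lemma lte_step:
  fixes p m :: nat and a :: int
  assumes p: "prime p" and m: "m \<ge> 1" and pm: "odd p \<or> m \<ge> 2"
  shows "\<exists>b. (1 + int p ^ m * a) ^ p = 1 + int p ^ (m+1) * a + int p ^ (m+2) * b"
proof -
  define y where "y = int p ^ m * a"
  have p2: "p \<ge> 2" using p prime_ge_2_nat by blast
  have bin: "(y + 1) ^ p = (\<Sum>i\<le>p. of_nat (p choose i) * y ^ i * 1 ^ (p - i))"
    by (rule binomial_ring)
  have split: "{..p} = {0,1} \<union> {2..p}" using p2 by auto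
  have sum01: "(\<Sum>i\<in>{0,1}. of_nat (p choose i) * y ^ i * 1 ^ (p - i)) = 1 + int p * y"
    by simp
  have dv: "int p ^ (m+2) dvd of_nat (p choose i) * y ^ i * 1 ^ (p - i)" if i: "i \<in> {2..p}" for i
  proof (cases "i < p")
    case True
    have "p dvd (p choose i)" using dvd_choose_prime[of i p] True i p by auto
    hence d1: "int p dvd of_nat (p choose i)" by (metis of_nat_dvd_iff of_nat_eq_of_nat_power_cancel_iff)
    have "y ^ i = int p ^ (m*i) * a ^ i" unfolding y_def by (simp add: power_mult_distrib power_mult)
    moreover have "int p ^ (m+1) dvd int p ^ (m*i)" using i m
      by (intro le_imp_power_dvd) (cases i; auto simp: nat_distrib)
    ultimately have "int p ^ (m+1) dvd y ^ i" by simp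
    with d1 have "int p * int p ^ (m+1) dvd of_nat (p choose i) * y ^ i" by (rule mult_dvd_mono)
    thus ?thesis by (simp add: power_add mult_ac)
  next
    case False
    hence ip: "i = p" using i by auto
    have "y ^ p = int p ^ (m*p) * a ^ p" unfolding y_def by (simp add: power_mult_distrib power_mult)
    moreover have "m + 2 \<le> m * p"
    proof (cases "odd p")
      case True
      hence "p \<ge> 3" using p2 by presburger
      hence "m * p \<ge> m * 3" by simp
      thus ?thesis using m by linarith
    next
      case False
      hence "m \<ge> 2" using pm by auto
      hence "m * p \<ge> m * 2" using p2 by simp
      thus ?thesis using \<open>m \<ge> 2\<close> by linarith
    qed
    hence "int p ^ (m+2) dvd int p ^ (m*p)" by (rule le_imp_power_dvd)
    ultimately show ?thesis using ip by simp
  qed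
  obtain b where b: "(\<Sum>i\<in>{2..p}. of_nat (p choose i) * y ^ i * 1 ^ (p - i)) = int p ^ (m+2) * b"
  proof -
    have "int p ^ (m+2) dvd (\<Sum>i\<in>{2..p}. of_nat (p choose i) * y ^ i * 1 ^ (p - i))"
      by (rule dvd_sum) (rule dv)
    then show ?thesis using that by (elim dvdE) blast
  qed
  have "(y+1)^p = 1 + int p * y + int p ^ (m+2) * b"
    unfolding bin split by (subst sum.union_disjoint) (use sum01 b in auto)
  thus ?thesis unfolding y_def by (intro exI[of _ b]) (simp add: add.commute mult_ac)
qed

lemma lte:
  fixes p k j :: nat
  assumes p: "prime p" and k: "k \<ge> 1" and pk: "odd p \<or> k \<ge> 2"
  shows "\<exists>w. (1 + int p ^ k) ^ (p ^ j) = 1 + int p ^ (k+j) * w \<and> [w = 1] (mod int p)"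
proof (induction j)
  case 0 then show ?case by (intro exI[of _ 1]) simp
next
  case (Suc j)
  then obtain w where w: "(1 + int p ^ k) ^ (p ^ j) = 1 + int p ^ (k+j) * w" "[w = 1] (mod int p)" by blast
  obtain b where b: "(1 + int p ^ (k+j) * w) ^ p = 1 + int p ^ (k+j+1) * w + int p ^ (k+j+2) * b"
  proof -
    have "\<exists>b. (1 + int p ^ (k+j) * w) ^ p = 1 + int p ^ (k+j+1) * w + int p ^ (k+j+2) * b"
      by (rule lte_step[OF p]) (use k pk in auto)
    then show ?thesis using that by blast
  qed
  have "(1 + int p ^ k) ^ (p ^ Suc j) = ((1 + int p ^ k) ^ (p ^ j)) ^ p"
    by (simp add: power_mult[symmetric] mult.commute)
  also have "\<dots> = 1 + int p ^ (k + Suc j) * (w + int p * b)"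
    using w(1) b by (simp add: algebra_simps power_add)
  finally have e: "(1 + int p ^ k) ^ (p ^ Suc j) = 1 + int p ^ (k + Suc j) * (w + int p * b)" .
  have "[w + int p * b = w] (mod int p)" by (simp add: cong_def)
  with w(2) have "[w + int p * b = 1] (mod int p)" using cong_trans by blast
  with e show ?case by blast
qed



locale om =
  fixes p k \<nu> :: nat
  assumes p: "prime p" and k1: "1 \<le> k" and kn: "k \<le> \<nu>" and pk: "odd p \<or> (p = 2 \<and> k \<ge> 2)"
begin

abbreviation "N \<equiv> int p ^ \<nu>"
abbreviation "n \<equiv> p ^ (\<nu> - k)"
abbreviation "\<sigma> \<equiv> 1 + int p ^ k"
abbreviation "pw j \<equiv> \<sigma> ^ j mod N"
abbreviation "G \<equiv> Omega p k \<nu>"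

lemma p2: "p \<ge> 2" using p prime_ge_2_nat by blast

lemma N_gt1: "N > 1"
proof -
  have "\<nu> \<ge> 1" using k1 kn by simp
  have "int p \<le> int p ^ \<nu>" using power_increasing[of 1 \<nu> "int p"] p2 \<open>\<nu> \<ge> 1\<close> by simp
  moreover have "int p \<ge> 2" using p2 by simp
  ultimately show ?thesis by linarith
qed

lemma N_split: "N = int p ^ (\<nu> - k) * int p ^ k"
  using kn by (simp add: power_add[symmetric])

lemma pk_dvd_N: "int p ^ k dvd N" using N_split by simp

lemma pw_in: "pw j \<in> G"
proof -
  have "[\<sigma> = 1] (mod int p ^ k)" by (simp add: cong_def)
  hence "[\<sigma> ^ j = 1] (mod int p ^ k)" using cong_pow by fastforce
  moreover have "[pw j = \<sigma> ^ j] (mod int p ^ k)"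
    using pk_dvd_N by (simp add: cong_def mod_mod_cancel)
  ultimately have "[pw j = 1] (mod int p ^ k)" using cong_trans by blast
  moreover have "pw j \<in> {0..<N}" 
  proof -
    have "N > 0" using N_gt1 by linarith
    thus ?thesis using Euclidean_Rings.pos_mod_bound Euclidean_Rings.pos_mod_sign by (simp del: of_nat_power)
  qed
  ultimately show ?thesis unfolding Omega_def by blast
qed

lemma pw_mul: "Omega_mul p \<nu> (pw i) (pw j) = pw (i + j)"
  unfolding Omega_mul_def by (simp add: mod_mult_eq power_add)

lemma pw0: "pw 0 = 1" using N_gt1 by simp

lemma u_ex: "\<exists>u. \<sigma> ^ n = 1 + N * u \<and> [u = 1] (mod int p)"
  using lte[OF p k1, of "\<nu> - k"] pk kn by auto

definition u where "u = (SOME u. \<sigma> ^ n = 1 + N * u \<and> [u = 1] (mod int p))"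

lemma u: "\<sigma> ^ n = 1 + N * u" "[u = 1] (mod int p)"
  using someI_ex[OF u_ex] unfolding u_def by auto

lemma pwn: "pw n = 1" using u(1) N_gt1 by simp

lemma prime_P: "prime (int p)" using p by simp

lemma not_dvd_one_cong: "[w = 1] (mod int p) \<Longrightarrow> \<not> int p dvd w"
proof
  assume "[w = 1] (mod int p)" "int p dvd w"
  hence "int p dvd 1" using cong_dvd_iff by blast
  thus False using p2 by simp
qed

lemma coprime_u: "coprime u (int p ^ k)"
  using not_dvd_one_cong[OF u(2)] prime_P
  by (simp add: coprime_commute prime_imp_coprime coprime_power_right_iff)

lemma S_n: "(\<Sum>i<n. \<sigma> ^ i) = int p ^ (\<nu> - k) * u"
proof -
  have "\<sigma> ^ n - 1 = (\<sigma> - 1) * (\<Sum>i<n. \<sigma> ^ i)" by (rule power_diff_1_eq)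
  hence "int p ^ k * (\<Sum>i<n. \<sigma> ^ i) = N * u"
    using u(1) by simp
  also have "\<dots> = int p ^ k * (int p ^ (\<nu> - k) * u)"
    by (subst N_split) simp
  finally have "int p ^ k * (\<Sum>i<n. \<sigma> ^ i) = int p ^ k * (int p ^ (\<nu> - k) * u)" .
  moreover have "int p ^ k \<noteq> 0" using p2 by simp
  ultimately show ?thesis by (metis mult_left_cancel)
qed

lemma coprime_sigma: "coprime \<sigma> N"
proof -
  have "\<not> int p dvd \<sigma>"
  proof
    assume "int p dvd \<sigma>"
    moreover have "int p dvd int p ^ k" using k1 by (simp add: dvd_power)
    ultimately have "int p dvd 1" by (metis add_diff_cancel_right' dvd_diff)
    thus False using p2 by simp
  qed
  thus ?thesis using prime_P
    by (simp add: coprime_commute prime_imp_coprime coprime_power_right_iff)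
qed

lemma no_small_period:
  assumes d0: "0 < d" and dn: "d < n" shows "\<not> [\<sigma> ^ d = 1] (mod N)"
proof
  assume c: "[\<sigma> ^ d = 1] (mod N)"
  define sn :: nat where "sn = 1 + p ^ k"
  have conv: "[\<sigma> ^ e = 1] (mod N) \<longleftrightarrow> [sn ^ e = 1] (mod p ^ \<nu>)" for e
  proof -
    have "[\<sigma> ^ e = 1] (mod N) \<longleftrightarrow> [int (sn ^ e) = int 1] (mod int (p ^ \<nu>))"
      unfolding sn_def by simp
    also have "\<dots> \<longleftrightarrow> [sn ^ e = 1] (mod p ^ \<nu>)" by (rule cong_int_iff)
    finally show ?thesis .
  qed
  have "[\<sigma> ^ n = 1] (mod N)" using u(1) by (simp add: cong_def)
  hence "ord (p ^ \<nu>) sn dvd n" using conv ord_divides by blast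
  then obtain a where a: "a \<le> \<nu> - k" "ord (p ^ \<nu>) sn = p ^ a"
    using divides_primepow_nat[OF p] by blast
  have "ord (p ^ \<nu>) sn dvd d" using c conv ord_divides by blast
  hence "p ^ a \<le> d" using a d0 by (simp add: dvd_imp_le)
  hence "p ^ a < p ^ (\<nu> - k)" using dn by linarith
  moreover have "1 < p" using p2 by simp
  ultimately have alt: "a < \<nu> - k" using power_less_imp_less_exp by blast
  define j where "j = \<nu> - k - 1"
  have kj: "k + j = \<nu> - 1" "a \<le> j" using alt kn unfolding j_def by auto
  have "ord (p ^ \<nu>) sn dvd p ^ j" using a kj by (simp add: le_imp_power_dvd)
  hence cj: "[\<sigma> ^ (p ^ j) = 1] (mod N)" using conv ord_divides by blast
  obtain w where w: "\<sigma> ^ (p ^ j) = 1 + int p ^ (\<nu> - 1) * w" "[w = 1] (mod int p)"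
    using lte[OF p k1, of j] pk kj by auto
  have "N dvd int p ^ (\<nu> - 1) * w" using cj w(1) by (simp add: cong_iff_dvd_diff)
  moreover have "N = int p ^ (\<nu> - 1) * int p"
  proof -
    have "\<nu> = Suc (\<nu> - 1)" using k1 kn by simp
    hence "N = int p ^ Suc (\<nu> - 1)" by simp
    thus ?thesis by (simp add: power_Suc2)
  qed
  ultimately have "int p dvd w" using p2 by simp
  thus False using not_dvd_one_cong[OF w(2)] by blast
qed

lemma pw_inj: "inj_on pw {..<n}"
proof -
  have *: "False" if ij: "i < j" "j < n" "pw i = pw j" for i j
  proof -
    have "[\<sigma> ^ i * \<sigma> ^ (j - i) = \<sigma> ^ i * 1] (mod N)"
      using ij by (simp add: cong_def power_add[symmetric])
    moreover have "coprime (\<sigma> ^ i) N" using coprime_sigma coprime_power_left_iff by blast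
    ultimately have "[\<sigma> ^ (j - i) = 1] (mod N)" using cong_mult_lcancel by blast
    thus False using no_small_period[of "j - i"] ij by simp
  qed
  show ?thesis
  proof (rule inj_onI)
    fix i j assume "i \<in> {..<n}" "j \<in> {..<n}" "pw i = pw j"
    thus "i = j" using *[of i j] *[of j i] by (cases i j rule: linorder_cases) auto
  qed
qed

lemma G_card: "card G = n"
proof -
  define K where "K = int p ^ k"
  have "int p \<le> int p ^ k" using power_increasing[of 1 k "int p"] p2 k1 by simp
  hence K2: "K \<ge> 2" unfolding K_def using p2 by linarith
  have NK: "N = int p ^ (\<nu> - k) * K" unfolding K_def using N_split .
  have "G = (\<lambda>b. 1 + b * K) ` {0..<int p ^ (\<nu> - k)}"
  proof (intro equalityI subsetI)
    fix x assume "x \<in> G"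
    hence x: "0 \<le> x" "x < N" "[x = 1] (mod K)" unfolding Omega_def K_def by auto
    then obtain b where b: "x - 1 = K * b" using cong_iff_dvd_diff by (metis dvdE)
    have "b \<ge> 0"
    proof (rule ccontr)
      assume "\<not> b \<ge> 0" hence "b \<le> -1" by simp
      hence "K * b \<le> K * (-1)" using K2 by (intro mult_left_mono) auto
      thus False using b x K2 by linarith
    qed
    moreover have "b < int p ^ (\<nu> - k)"
    proof -
      have "K * b < K * int p ^ (\<nu> - k)" using b x NK by (simp add: mult.commute)
      thus ?thesis using K2 by (simp add: mult_less_cancel_left)
    qed
    ultimately show "x \<in> (\<lambda>b. 1 + b * K) ` {0..<int p ^ (\<nu> - k)}"
      using b by (intro image_eqI[of _ _ b]) (auto simp: algebra_simps)
  next
    fix x assume "x \<in> (\<lambda>b. 1 + b * K) ` {0..<int p ^ (\<nu> - k)}"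
    then obtain b where b: "0 \<le> b" "b < int p ^ (\<nu> - k)" "x = 1 + b * K" by auto
    have "b \<le> int p ^ (\<nu> - k) - 1" using b by simp
    hence "b * K \<le> (int p ^ (\<nu> - k) - 1) * K" using K2 by (intro mult_right_mono) auto
    hence "x < N" using b(3) NK K2 by (simp add: algebra_simps)
    moreover have "0 \<le> x" using b K2 by simp
    moreover have "[x = 1] (mod K)" using b(3) by (simp add: cong_def)
    ultimately show "x \<in> G" unfolding Omega_def K_def by auto
  qed
  moreover have "inj_on (\<lambda>b. 1 + b * K) {0..<int p ^ (\<nu> - k)}"
    using K2 by (intro inj_onI) simp
  ultimately have "card G = card {0..<int p ^ (\<nu> - k)}" by (simp add: card_image)
  also have "\<dots> = n" by (simp add: nat_power_eq del: of_nat_power)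
  finally show ?thesis .
qed

lemma G_eq: "G = pw ` {..<n}"
proof -
  have fin: "finite G" unfolding Omega_def by (rule finite_subset[of _ "{0..<N}"]) auto
  have sub: "pw ` {..<n} \<subseteq> G" using pw_in by auto
  have "card (pw ` {..<n}) = n" using pw_inj by (simp add: card_image)
  thus ?thesis using card_subset_eq[OF fin sub] G_card by simp
qed

end


lemma cong_move: "[a mod N - b + c = 0] (mod N) \<Longrightarrow> [b = a + c] (mod N)" for a b c N :: int
proof -
  assume "[a mod N - b + c = 0] (mod N)"
  moreover have "(a mod N - b + c) mod N = (a - b + c) mod N" by (metis mod_add_left_eq mod_diff_left_eq)
  ultimately have "[a - b + c = 0] (mod N)" by (simp add: cong_def)
  hence "N dvd (a - b + c)" by (simp add: cong_0_iff)
  hence "N dvd (b - (a + c))" by (metis dvd_minus_iff minus_diff_eq diff_diff_eq2 add.commute diff_add_eq)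
  thus ?thesis by (simp add: cong_iff_dvd_diff)
qed

context om begin

lemma mod_range: "x mod N \<in> ZN N"
proof -
  have "N > 0" using N_gt1 by linarith
  thus ?thesis unfolding ZN_def using Euclidean_Rings.pos_mod_bound Euclidean_Rings.pos_mod_sign by (simp del: of_nat_power)
qed

lemma one_in: "1 \<in> G" using pw_in[of 0] pw0 by simp

lemma mul1: "g \<in> G \<Longrightarrow> Omega_mul p \<nu> g 1 = g" "g \<in> G \<Longrightarrow> Omega_mul p \<nu> 1 g = g"
  unfolding Omega_mul_def Omega_def by auto

lemma pw_cong: "[pw j = \<sigma> ^ j] (mod N)" by simp

lemma G_pw: "g \<in> G \<Longrightarrow> \<exists>j<n. g = pw j" using G_eq by auto

lemma H1: "H1_vanishes G (Omega_mul p \<nu>) (Omega_act p \<nu>) N"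
  unfolding H1_vanishes_def
proof (rule subsetI)
  fix f assume f: "f \<in> cocycles1 G (Omega_mul p \<nu>) (Omega_act p \<nu>) N"
  have fZ: "g \<in> G \<Longrightarrow> f g \<in> ZN N" for g using f unfolding cocycles1_def cochains1_def by auto
  have cf: "[f (Omega_mul p \<nu> g h) = g * f h + f g] (mod N)" if "g \<in> G" "h \<in> G" for g h
  proof -
    have "(Omega_act p \<nu> g (f h) - f (Omega_mul p \<nu> g h) + f g) mod N = 0"
      using f that unfolding cocycles1_def by auto
    hence "[(g * f h) mod N - f (Omega_mul p \<nu> g h) + f g = 0] (mod N)"
      unfolding Omega_act_def by (simp add: cong_def)
    thus ?thesis by (rule cong_move)
  qed
  define a where "a = f (pw 1)"
  have f1: "[f 1 = 0] (mod N)"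
  proof -
    have "[f 1 = 1 * f 1 + f 1] (mod N)" using cf[OF one_in one_in] mul1[OF one_in] by simp
    hence "N dvd (f 1 - (f 1 + f 1))" by (simp add: cong_iff_dvd_diff)
    hence "N dvd f 1" by (metis add_diff_cancel_left' diff_add_cancel dvd_minus_iff minus_diff_eq diff_diff_eq2)
    thus ?thesis by (simp add: cong_0_iff)
  qed
  have fj: "[f (pw j) = (\<Sum>i<j. \<sigma> ^ i) * a] (mod N)" for j
  proof (induction j)
    case 0 then show ?case using f1 pw0 by simp
  next
    case (Suc j)
    have "pw (Suc j) = Omega_mul p \<nu> (pw j) (pw 1)" using pw_mul[of j 1] by simp
    hence "[f (pw (Suc j)) = pw j * a + f (pw j)] (mod N)"
      using cf[OF pw_in pw_in, of j 1] unfolding a_def by simp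
    also have "[pw j * a + f (pw j) = \<sigma> ^ j * a + (\<Sum>i<j. \<sigma> ^ i) * a] (mod N)"
      by (intro cong_add cong_mult Suc.IH pw_cong cong_refl)
    also have "\<sigma> ^ j * a + (\<Sum>i<j. \<sigma> ^ i) * a = (\<Sum>i<Suc j. \<sigma> ^ i) * a"
      by (simp add: algebra_simps)
    finally show ?case .
  qed
  have "[(\<Sum>i<n. \<sigma> ^ i) * a = 0] (mod N)"
    using fj[of n] pwn f1 by (metis cong_sym cong_trans)
  hence "N dvd int p ^ (\<nu> - k) * (u * a)" using S_n by (simp add: cong_0_iff mult.assoc)
  hence "int p ^ (\<nu> - k) * int p ^ k dvd int p ^ (\<nu> - k) * (u * a)" using N_split by simp
  hence "int p ^ k dvd u * a" using p2 by simp
  hence "int p ^ k dvd a" using coprime_u by (metis coprime_commute coprime_dvd_mult_right_iff coprime_dvd_mult_left_iff)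
  then obtain m where m: "a = int p ^ k * m" by (elim dvdE)
  define m0 where "m0 = m mod N"
  have m0: "m0 \<in> ZN N" unfolding m0_def by (rule mod_range)
  have "f g = (Omega_act p \<nu> g m0 - m0) mod N" if g: "g \<in> G" for g
  proof -
    obtain j where j: "g = pw j" using G_pw[OF g] by blast
    have "[f g = (\<Sum>i<j. \<sigma> ^ i) * a] (mod N)" using fj j by simp
    also have "(\<Sum>i<j. \<sigma> ^ i) * a = (\<sigma> ^ j - 1) * m"
      using power_diff_1_eq[of \<sigma> j] m by (simp add: algebra_simps)
    finally have c: "[f g = \<sigma> ^ j * m - m] (mod N)" by (simp add: algebra_simps)
    have "f g = f g mod N" using fZ[OF g] unfolding ZN_def by simp
    also have "\<dots> = (\<sigma> ^ j * m - m) mod N" using c by (simp add: cong_def)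
    also have "\<dots> = (Omega_act p \<nu> g m0 - m0) mod N"
      unfolding Omega_act_def m0_def j by (simp add: mod_simps)
    finally show ?thesis .
  qed
  thus "f \<in> coboundaries1 G (Omega_mul p \<nu>) (Omega_act p \<nu>) N"
    using f m0 unfolding coboundaries1_def cocycles1_def by auto
qed

end


context om begin

abbreviation "M \<equiv> Omega_mul p \<nu>"

lemma modfix1: "(x mod N - a + b - d) mod N = (x - a + b - d) mod N" for x a b d :: int
proof -
  have "(x mod N - a + b - d) = x mod N + (b - a - d)" "x - a + b - d = x + (b - a - d)" by simp_all
  thus ?thesis by (simp only: mod_add_left_eq)
qed

lemma modfix2: "(x - a + b) mod N = (x mod N - a + b) mod N" for x a b :: int
proof -
  have "(x mod N - a + b) = x mod N + (b - a)" "x - a + b = x + (b - a)" by simp_all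
  thus ?thesis by (simp only: mod_add_left_eq)
qed

lemma closed: "g \<in> G \<Longrightarrow> h \<in> G \<Longrightarrow> M g h \<in> G"
proof -
  assume "g \<in> G" "h \<in> G"
  then obtain i j where "g = pw i" "h = pw j" using G_pw by blast
  thus ?thesis using pw_mul pw_in by simp
qed

lemma assoc: "M (M g h) l = M g (M h l)"
  unfolding Omega_mul_def by (simp add: mod_mult_left_eq mod_mult_right_eq mult.assoc)

lemma one_mod[simp]: "1 mod N = 1" using pw0 by simp

lemma n_pos: "1 \<le> n" using p2 by simp

lemma H2: "H2_vanishes G M (Omega_act p \<nu>) N"
  unfolding H2_vanishes_def
proof (rule subsetI)
  fix c assume c: "c \<in> cocycles2 G M (Omega_act p \<nu>) N"
  have cZ: "g \<in> G \<Longrightarrow> h \<in> G \<Longrightarrow> c g h \<in> ZN N" for g h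
    using c unfolding cocycles2_def cochains2_def by auto
  have cc: "[g * c h l - c (M g h) l + c g (M h l) - c g h = 0] (mod N)"
    if "g \<in> G" "h \<in> G" "l \<in> G" for g h l
  proof -
    have "(g * c h l mod N - c (M g h) l + c g (M h l) - c g h) mod N = 0"
      using c that unfolding cocycles2_def Omega_act_def by auto
    moreover have "(g * c h l mod N - c (M g h) l + c g (M h l) - c g h) mod N
        = (g * c h l - c (M g h) l + c g (M h l) - c g h) mod N"
      by (rule modfix1)
    ultimately show ?thesis by (simp add: cong_def)
  qed
  define s where "s = pw 1"
  have s_in: "s \<in> G" unfolding s_def by (rule pw_in)
  have c1: "[c g 1 = g * c 1 1] (mod N)" if g: "g \<in> G" for g
  proof -
    have "[g * c 1 1 - c g 1 + c g 1 - c g 1 = 0] (mod N)"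
      using cc[OF g one_in one_in] mul1[OF g] mul1[OF one_in] by simp
    thus ?thesis by (simp add: cong_iff_dvd_diff cong_0_iff dvd_diff_commute)
  qed
  have c2: "[c 1 s = c 1 1] (mod N)"
  proof -
    have "[1 * c 1 s - c 1 s + c 1 s - c 1 1 = 0] (mod N)"
      using cc[OF one_in one_in s_in] mul1[OF s_in] mul1[OF one_in] by simp
    thus ?thesis by (simp add: cong_iff_dvd_diff cong_0_iff)
  qed
  define C where "C = (\<Sum>j<n. c (pw j) s)"
  have Msuc: "M (pw j) s = pw (Suc j)" "M s (pw j) = pw (Suc j)" for j
    unfolding s_def using pw_mul[of j 1] pw_mul[of 1 j] by simp_all
  have inv: "[\<sigma> * C = C] (mod N)"
  proof -
    define F where "F j = c (pw j) s" for j
    define H where "H j = c s (pw j)" for j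
    have "[(\<Sum>j<n. s * F j - F (Suc j) + H (Suc j) - H j) = (\<Sum>j<n. 0)] (mod N)"
      by (rule cong_sum) (use cc[OF s_in pw_in s_in] Msuc in \<open>simp add: F_def H_def\<close>)
    moreover have "(\<Sum>j<n. s * F j - F (Suc j) + H (Suc j) - H j)
        = s * (\<Sum>j<n. F j) - (\<Sum>j<n. F j) - (\<Sum>j<n. F (Suc j) - F j) + (\<Sum>j<n. H (Suc j) - H j)"
      by (simp add: sum_subtractf sum.distrib sum_distrib_left algebra_simps)
    moreover have "(\<Sum>j<n. F (Suc j) - F j) = 0" "(\<Sum>j<n. H (Suc j) - H j) = 0"
      by (simp_all only: sum_lessThan_telescope) (simp_all add: F_def H_def pwn pw0 del: power_Suc)
    ultimately have "[s * C - C = 0] (mod N)" unfolding C_def F_def by simp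
    hence "[s * C = C] (mod N)" by (simp add: cong_iff_dvd_diff cong_0_iff)
    moreover have "[\<sigma> * C = s * C] (mod N)" unfolding s_def by (simp add: cong_def mod_mult_left_eq)
    ultimately show ?thesis using cong_trans by blast
  qed
  have "N dvd int p ^ k * C" using inv by (simp add: cong_iff_dvd_diff algebra_simps)
  hence "int p ^ (\<nu> - k) * int p ^ k dvd C * int p ^ k" using N_split by (simp add: mult.commute)
  hence "int p ^ (\<nu> - k) dvd C" using p2 by simp
  then obtain C' where C': "C = int p ^ (\<nu> - k) * C'" by (elim dvdE)
  obtain v where v: "[u * v = 1] (mod int p ^ k)" using cong_solve_coprime_int[OF coprime_u] by blast
  define t where "t = v * C'"
  have "[u * t = C'] (mod int p ^ k)"
    unfolding t_def using cong_scalar_right[OF v, of C'] by (simp add: mult.assoc)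
  hence "[int p ^ (\<nu> - k) * (u * t) = int p ^ (\<nu> - k) * C'] (mod int p ^ (\<nu> - k) * int p ^ k)"
    by (rule cong_cmult_leftI)
  hence St: "[(\<Sum>i<n. \<sigma> ^ i) * t = C] (mod N)" using S_n C' N_split by (simp add: mult.assoc)
  define B where "B j = c 1 1 + (\<Sum>i<j. \<sigma> ^ i) * t - (\<Sum>i<j. c (pw i) s)" for j
  have B_Suc: "B (Suc j) = B j + \<sigma> ^ j * t - c (pw j) s" for j
    unfolding B_def by (simp add: algebra_simps)
  have B0: "B 0 = c 1 1" unfolding B_def by simp
  have Bn: "[B n = B 0] (mod N)"
  proof -
    have "[B n = c 1 1 + C - C] (mod N)" unfolding B_def C_def[symmetric]
      by (intro cong_diff cong_add cong_refl St)
    thus ?thesis using B0 by simp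
  qed
  define idx where "idx g = (THE j. j < n \<and> pw j = g)" for g
  have idx: "j < n \<Longrightarrow> idx (pw j) = j" for j
    unfolding idx_def using pw_inj by (intro the_equality) (auto dest: inj_onD)
  define b where "b g = (if g \<in> G then B (idx g) mod N else 0)" for g
  have b_co: "b \<in> cochains1 G N" unfolding cochains1_def b_def using mod_range by auto
  have bpw: "[b (pw j) = B j] (mod N)" if "j \<le> n" for j
  proof (cases "j < n")
    case True thus ?thesis unfolding b_def using idx pw_in by simp
  next
    case False
    hence j: "j = n" using that by simp
    have "b (pw j) = b (pw 0)" using j pwn pw0 by simp
    also have "\<dots> = B 0 mod N" unfolding b_def using idx[of 0] one_in n_pos p2 by simp
    finally show ?thesis using Bn j by (simp add: cong_def)
  qed
  have B1: "[B 1 = t] (mod N)"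
  proof -
    have "B 1 = c 1 1 + t - c 1 s" unfolding B_def using pw0 by simp
    moreover have "[c 1 1 + t - c 1 s = c 1 1 + t - c 1 1] (mod N)"
      by (intro cong_diff cong_refl c2)
    ultimately show ?thesis by simp
  qed
  have bs: "[b s = t] (mod N)" unfolding s_def using bpw[of 1] n_pos B1 cong_trans by blast
  define Q where "Q g h \<longleftrightarrow> [c g h = g * b h - b (M g h) + b g] (mod N)" for g h
  have Qs: "Q g s" if g: "g \<in> G" for g
  proof -
    obtain j where j: "j < n" "g = pw j" using G_pw[OF g] by blast
    have "[g * b s - b (M g s) + b g = \<sigma> ^ j * t - B (Suc j) + B j] (mod N)"
      unfolding j(2) Msuc using j(1) by (intro cong_add cong_diff cong_mult pw_cong bs bpw) auto
    also have "\<sigma> ^ j * t - B (Suc j) + B j = c g s" using j B_Suc by simp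
    finally show ?thesis unfolding Q_def by (rule cong_sym)
  qed
  have Q1: "Q g 1" if g: "g \<in> G" for g
  proof -
    have "[g * b 1 - b (M g 1) + b g = g * B 0] (mod N)"
      using mul1[OF g] bpw[of 0] pw0 by (simp add: cong_scalar_left)
    thus ?thesis unfolding Q_def B0 using c1[OF g] cong_sym cong_trans by blast
  qed
  have Qall: "Q g (pw i)" if g: "g \<in> G" for g i
  proof (induction i)
    case 0 thus ?case using Q1[OF g] pw0 by simp
  next
    case (Suc i)
    define h where "h = pw i"
    have h: "h \<in> G" unfolding h_def by (rule pw_in)
    have gh: "M g h \<in> G" using closed g h by blast
    have hs: "M h s = pw (Suc i)" unfolding h_def by (rule Msuc)
    have e1: "[c g (M h s) = c g h + c (M g h) s - g * c h s] (mod N)"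
    proof -
      have "[g * c h s - c (M g h) s + c g (M h s) - c g h = 0] (mod N)" using cc[OF g h s_in] .
      thus ?thesis by (simp add: cong_iff_dvd_diff cong_0_iff algebra_simps)
    qed
    have "[c g h + c (M g h) s - g * c h s =
           (g * b h - b (M g h) + b g) + (M g h * b s - b (M (M g h) s) + b (M g h))
            - g * (h * b s - b (M h s) + b h)] (mod N)"
      using Suc.IH Qs[OF gh] Qs[OF h] unfolding Q_def h_def
      by (intro cong_add cong_diff cong_mult cong_refl) auto
    also have "[(g * b h - b (M g h) + b g) + (M g h * b s - b (M (M g h) s) + b (M g h))
            - g * (h * b s - b (M h s) + b h) =
           (g * b h - b (M g h) + b g) + ((g * h) * b s - b (M (M g h) s) + b (M g h))
            - g * (h * b s - b (M h s) + b h)] (mod N)"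
      unfolding Omega_mul_def by (intro cong_add cong_diff cong_mult cong_refl) (simp add: cong_def)
    also have "(g * b h - b (M g h) + b g) + ((g * h) * b s - b (M (M g h) s) + b (M g h))
            - g * (h * b s - b (M h s) + b h) = g * b (M h s) - b (M g (M h s)) + b g"
    proof -
      have "M (M g h) s = M g (M h s)" by (rule assoc)
      hence "b (M (M g h) s) = b (M g (M h s))" by simp
      thus ?thesis by (simp add: algebra_simps)
    qed
    finally have e2: "[c g h + c (M g h) s - g * c h s =
       g * b (M h s) - b (M g (M h s)) + b g] (mod N)" .
    have "[c g (M h s) = g * b (M h s) - b (M g (M h s)) + b g] (mod N)"
      using e1 e2 by (rule cong_trans)
    thus ?case unfolding Q_def hs[symmetric] .
  qed
  have "c g h = (Omega_act p \<nu> g (b h) - b (M g h) + b g) mod N" if gh: "g \<in> G" "h \<in> G" for g h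
  proof -
    obtain i where i: "h = pw i" using G_pw[OF gh(2)] by blast
    have "c g h = c g h mod N" using cZ[OF gh] unfolding ZN_def by simp
    also have "\<dots> = (g * b h - b (M g h) + b g) mod N"
      using Qall[OF gh(1), of i] i unfolding Q_def cong_def by simp
    also have "\<dots> = (Omega_act p \<nu> g (b h) - b (M g h) + b g) mod N"
      unfolding Omega_act_def by (rule modfix2)
    finally show ?thesis .
  qed
  thus "c \<in> coboundaries2 G M (Omega_act p \<nu>) N"
    using c b_co unfolding coboundaries2_def cocycles2_def by blast
qed

end

theorem lemma2p4:
  fixes p k \<nu> :: nat
  assumes "prime p" and "1 \<le> k" and "k \<le> \<nu>"
    and "odd p \<or> (p = 2 \<and> k \<ge> 2)"
  shows "H1_vanishes (Omega p k \<nu>) (Omega_mul p \<nu>) (Omega_act p \<nu>) (int p ^ \<nu>)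
       \<and> H2_vanishes (Omega p k \<nu>) (Omega_mul p \<nu>) (Omega_act p \<nu>) (int p ^ \<nu>)"
proof -
  interpret om p k \<nu> using assms by unfold_locales auto
  show ?thesis using H1 H2 by simp
qed

end
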